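(* In the setting described in the context, for arbitrary but fixed $\tilde u\in U_h^{(2)}$ and $\tilde z\in V_h^{(2)}$, the error representation $$J(u_h^{(2)})-J(\tilde u)=\tfrac12\rho(\tilde u)(z_h^{(2)}-\tilde z)+\tfrac12\rho^*(\tilde u,\tilde z)(u_h^{(2)}-\tilde u)+\rho(\tilde u)(\tilde z)+\mathcal{R}^{(3)(2)}$$ holds.
   Context: Let $U$ and $V$ be real Banach spaces with dual $V^*$. Let $\mathcal{A}:U\to V^*$ be a (nonlinear) operator that is three times continuously Fréchet differentiable, and let $J:U\to\mathbb{R}$ be three times continuously Fréchet differentiable. Notation: $\mathcal{A}(w)(v)$ is the value of $\mathcal{A}(w)\in V^*$ at $v\in V$. For fixed $v$, $\mathcal{A}'(w)(\varphi,v)$, $\mathcal{A}''(w)(\varphi,\psi,v)$ and $\mathcal{A}'''(w)(\varphi,\psi,\chi,v)$ denote the first, second and third Fréchet derivatives of $w\mapsto\mathcal{A}(w)(v)$ at $w$ in the directions $\varphi,\psi,\chi\in U$. Analogously, $J'(w)(\varphi)$ and $J'''(w)(\varphi,\psi,\chi)$ denote derivatives of $J$. Let $U_h^{(2)}\subset U$ and $V_h^{(2)}\subset V$ be finite-dimensional subspaces. Let $u_h^{(2)}\in U_h^{(2)}$ satisfy $\mathcal{A}(u_h^{(2)})(v)=0$ for all $v\in V_h^{(2)}$. Let $z_h^{(2)}\in V_h^{(2)}$ satisfy $\mathcal{A}'(u_h^{(2)})(\varphi,z_h^{(2)})=J'(u_h^{(2)})(\varphi)$ for all $\varphi\in U_h^{(2)}$.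 Define $\rho(\tilde u)(v):=-\mathcal{A}(\tilde u)(v)$ and $\rho^*(\tilde u,\tilde z)(\varphi):=J'(\tilde u)(\varphi)-\mathcal{A}'(\tilde u)(\varphi,\tilde z)$. With $e^{(2)}:=u_h^{(2)}-\tilde u$ and $e^{(2),*}:=z_h^{(2)}-\tilde z$, define $$\mathcal{R}^{(3)(2)}:=\frac12\int_0^1\Big[J'''(\tilde u+se^{(2)})(e^{(2)},e^{(2)},e^{(2)})-\mathcal{A}'''(\tilde u+se^{(2)})(e^{(2)},e^{(2)},e^{(2)},\tilde z+se^{(2),*})-3\mathcal{A}''(\tilde u+se^{(2)})(e^{(2)},e^{(2)},e^{(2),*})\Big]s(s-1)\,ds.$$ *)

theory Defs
  imports "HOL-Analysis.Analysis"
begin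

definition fin_dim_subspace :: "'a::real_vector set \<Rightarrow> bool" where
  "fin_dim_subspace S \<longleftrightarrow> subspace S \<and> (\<exists>B. finite B \<and> span B = S)"

end

theory Submission
  imports Defs
begin


lemma chainL:
  fixes F :: "'u::real_normed_vector \<Rightarrow> 'b::real_normed_vector"
  assumes "\<And>w. (F has_derivative blinfun_apply (F1 w)) (at w)"
  shows "((\<lambda>s. F (u + s *\<^sub>R e)) has_vector_derivative F1 (u + s *\<^sub>R e) e) (at s)"
proof -
  have p: "((\<lambda>s. u + s *\<^sub>R e) has_derivative (\<lambda>h. h *\<^sub>R e)) (at s)"
    by (auto intro!: derivative_eq_intros)
  have "((\<lambda>s. F (u + s *\<^sub>R e)) has_derivative (\<lambda>h. F1 (u + s *\<^sub>R e) (h *\<^sub>R e))) (at s)"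
    using has_derivative_compose[OF p assms] by (simp add: o_def)
  then show ?thesis unfolding has_vector_derivative_def by (simp add: blinfun.scaleR_right)
qed

lemma bilinL:
  assumes "(X has_vector_derivative X') (at s)" "(Y has_vector_derivative Y') (at s)"
  shows "((\<lambda>s. blinfun_apply (X s) (Y s)) has_vector_derivative (X' (Y s) + X s Y')) (at s)"
  using bounded_bilinear.has_vector_derivative[OF bounded_bilinear_blinfun_apply assms]
  by (simp add: add.commute)

lemma applL:
  assumes "(X has_vector_derivative X') (at s)"
  shows "((\<lambda>s. blinfun_apply (X s) c) has_vector_derivative X' c) (at s)"
  using bilinL[OF assms has_vector_derivative_const[of c]] by simp


theorem mainTheorem5:
  fixes A :: "'u::banach \<Rightarrow> ('v::banach \<Rightarrow>\<^sub>L real)"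
    and A1 :: "'u \<Rightarrow> ('u \<Rightarrow>\<^sub>L ('v \<Rightarrow>\<^sub>L real))"
    and A2 :: "'u \<Rightarrow> ('u \<Rightarrow>\<^sub>L ('u \<Rightarrow>\<^sub>L ('v \<Rightarrow>\<^sub>L real)))"
    and A3 :: "'u \<Rightarrow> ('u \<Rightarrow>\<^sub>L ('u \<Rightarrow>\<^sub>L ('u \<Rightarrow>\<^sub>L ('v \<Rightarrow>\<^sub>L real))))"
    and J :: "'u \<Rightarrow> real"
    and J1 :: "'u \<Rightarrow> ('u \<Rightarrow>\<^sub>L real)"
    and J2 :: "'u \<Rightarrow> ('u \<Rightarrow>\<^sub>L ('u \<Rightarrow>\<^sub>L real))"
    and J3 :: "'u \<Rightarrow> ('u \<Rightarrow>\<^sub>L ('u \<Rightarrow>\<^sub>L ('u \<Rightarrow>\<^sub>L real)))"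
    and Uh :: "'u set" and Vh :: "'v set"
    and uh ut :: 'u and zh zt :: 'v
  assumes dA: "\<And>w. (A has_derivative blinfun_apply (A1 w)) (at w)"
    and dA1: "\<And>w. (A1 has_derivative blinfun_apply (A2 w)) (at w)"
    and dA2: "\<And>w. (A2 has_derivative blinfun_apply (A3 w)) (at w)"
    and cA3: "continuous_on UNIV A3"
    and dJ: "\<And>w. (J has_derivative blinfun_apply (J1 w)) (at w)"
    and dJ1: "\<And>w. (J1 has_derivative blinfun_apply (J2 w)) (at w)"
    and dJ2: "\<And>w. (J2 has_derivative blinfun_apply (J3 w)) (at w)"
    and cJ3: "continuous_on UNIV J3"
    and Uh: "fin_dim_subspace Uh" and Vh: "fin_dim_subspace Vh"
    and uh: "uh \<in> Uh" and uh_eq: "\<And>v. v \<in> Vh \<Longrightarrow> A uh v = 0"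
    and zh: "zh \<in> Vh" and zh_eq: "\<And>\<phi>. \<phi> \<in> Uh \<Longrightarrow> A1 uh \<phi> zh = J1 uh \<phi>"
    and ut: "ut \<in> Uh" and zt: "zt \<in> Vh"
  shows "(let e = uh - ut; es = zh - zt;
              rho = (\<lambda>v. - A ut v);
              rhos = (\<lambda>\<phi>. J1 ut \<phi> - A1 ut \<phi> zt);
              R = 1/2 * integral {0..1} (\<lambda>s.
                    (J3 (ut + s *\<^sub>R e) e e e
                     - A3 (ut + s *\<^sub>R e) e e e (zt + s *\<^sub>R es)
                     - 3 * A2 (ut + s *\<^sub>R e) e e es) * (s * (s - 1)))
          in J uh - J ut = 1/2 * rho es + 1/2 * rhos e + rho zt + R)"
proof -
  define e where "e = uh - ut"
  define es where "es = zh - zt"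
  define p where "p = (\<lambda>s::real. ut + s *\<^sub>R e)"
  define q where "q = (\<lambda>s::real. zt + s *\<^sub>R es)"
  define g where "g = (\<lambda>s. J (p s) - A (p s) (q s))"
  define g1 where "g1 = (\<lambda>s. J1 (p s) e - (A1 (p s) e (q s) + A (p s) es))"
  define g2 where "g2 = (\<lambda>s. J2 (p s) e e - ((A2 (p s) e e (q s) + A1 (p s) e es) + A1 (p s) e es))"
  define g3 where "g3 = (\<lambda>s. J3 (p s) e e e - (((A3 (p s) e e e (q s) + A2 (p s) e e es) + A2 (p s) e e es) + A2 (p s) e e es))"
  have dq: "(q has_vector_derivative es) (at s)" for s
    unfolding q_def by (auto intro!: derivative_eq_intros)
  have d0: "(g has_vector_derivative g1 s) (at s)" for s
    unfolding g_def g1_def p_def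
    by (intro has_vector_derivative_diff chainL[OF dJ] bilinL[OF chainL[OF dA] dq])
  have d1: "(g1 has_vector_derivative g2 s) (at s)" for s
    unfolding g1_def g2_def p_def
    by (intro has_vector_derivative_diff has_vector_derivative_add applL chainL[OF dJ1]
        bilinL[OF applL[OF chainL[OF dA1]] dq] chainL[OF dA] ) 
  have d2: "(g2 has_vector_derivative g3 s) (at s)" for s
    unfolding g2_def g3_def p_def
    by (intro has_vector_derivative_diff has_vector_derivative_add
        bilinL[OF applL[OF applL[OF chainL[OF dA2]]] dq] applL chainL[OF dJ2] chainL[OF dA1])
  define F where "F = (\<lambda>s. g2 s * (s * (s - 1)) - g1 s * (2 * s - 1) + 2 * g s)"
  have dF: "(F has_vector_derivative (g3 s * (s * (s - 1)))) (at s within {0..1})" for s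
  proof -
    have "(F has_field_derivative
        (g3 s * (s * (s - 1)) + g2 s * ((s - 1) + s)) - (g2 s * (2 * s - 1) + g1 s * 2) + 2 * g1 s) (at s)"
      unfolding F_def
      using d0[of s] d1[of s] d2[of s]
      unfolding has_real_derivative_iff_has_vector_derivative[symmetric]
      by (auto intro!: derivative_eq_intros)
    then have "(F has_field_derivative (g3 s * (s * (s - 1)))) (at s)"
      by (simp add: algebra_simps)
    then show ?thesis
      by (simp add: has_real_derivative_iff_has_vector_derivative[symmetric] has_field_derivative_at_within)
  qed
  have I: "((\<lambda>s. g3 s * (s * (s - 1))) has_integral (F 1 - F 0)) {0..1}"
    by (rule fundamental_theorem_of_calculus) (auto intro: dF)
  have sU: "subspace Uh" and sV: "subspace Vh" using Uh Vh by (auto simp: fin_dim_subspace_def)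
  have eU: "e \<in> Uh" unfolding e_def by (rule subspace_diff[OF sU uh ut])
  have esV: "es \<in> Vh" unfolding es_def by (rule subspace_diff[OF sV zh zt])
  have p1: "p 1 = uh" and q1: "q 1 = zh" and p0: "p 0 = ut" and q0: "q 0 = zt"
    by (auto simp: p_def q_def e_def es_def)
  have g1_1: "g1 1 = 0"
    unfolding g1_def p1 q1 using uh_eq[OF esV] zh_eq[OF eU] by simp
  have g_1: "g 1 = J uh" unfolding g_def p1 q1 using uh_eq[OF zh] by simp
  have F1: "F 1 = 2 * J uh" unfolding F_def using g1_1 g_1 by simp
  have F0: "F 0 = g1 0 + 2 * g 0" unfolding F_def by simp
  have intv: "integral {0..1} (\<lambda>s. g3 s * (s * (s - 1))) = 2 * J uh - g1 0 - 2 * g 0"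
    using integral_unique[OF I] F1 F0 by simp
  have integrand: "(\<lambda>s. (J3 (ut + s *\<^sub>R e) e e e
                     - A3 (ut + s *\<^sub>R e) e e e (zt + s *\<^sub>R es)
                     - 3 * A2 (ut + s *\<^sub>R e) e e es) * (s * (s - 1))) = (\<lambda>s. g3 s * (s * (s - 1)))"
    by (auto simp: g3_def p_def q_def algebra_simps)
  show ?thesis
    unfolding Let_def e_def[symmetric] es_def[symmetric] integrand intv
    by (simp add: g1_def g_def p0 q0 algebra_simps)
qed

end
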